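(* Let $n\ge 2$ and let $G$ be a subgroup of $\mathrm{Sp}(n,1)$ containing $I_{n-2}\oplus c_1$, $I_{n-2}\oplus c_2$ and $I_{n-2}\oplus c_3$, where $c_1=\mathrm{diag}(1,i,-i)$, $c_2=\mathrm{diag}(i,1,-i)$, $c_3=\mathrm{diag}(i,-i,1)$. Then for every $g\in\mathrm{Sp}(n,1)$, the set of traces of the elements of $gGg^{-1}$ is not contained in $\mathbb R$.
   Context: $\mathbb H$ denotes the quaternions, with units $i,j,k$. $\mathrm{Sp}(n,1)=\{A\in\mathrm{GL}(n+1,\mathbb H): A^*I_{n,1}A=I_{n,1}\}$ with $A^*$ the conjugate transpose and $I_{n,1}=\mathrm{diag}(1,\dots,1,-1)$. $I_{n-2}\oplus c$ denotes the block diagonal matrix with the $(n-2)\times(n-2)$ identity in the upper left block and the $3\times 3$ matrix $c$ in the lower right block. The trace of a quaternionic matrix is the sum of its diagonal entries. *)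

theory Defs
  imports "HOL-Analysis.Analysis" "HOL-Algebra.Group"
begin

datatype quat = Quat (qRe: real) (qI: real) (qJ: real) (qK: real)

lemma quat_eqI: "qRe x = qRe y \<Longrightarrow> qI x = qI y \<Longrightarrow> qJ x = qJ y \<Longrightarrow> qK x = qK y \<Longrightarrow> x = y"
  by (cases x; cases y) simp

instantiation quat :: ring_1
begin
definition "0 = Quat 0 0 0 0"
definition "1 = Quat 1 0 0 0"
definition "x + y = Quat (qRe x + qRe y) (qI x + qI y) (qJ x + qJ y) (qK x + qK y)"
definition "x - y = Quat (qRe x - qRe y) (qI x - qI y) (qJ x - qJ y) (qK x - qK y)"
definition "- x = Quat (- qRe x) (- qI x) (- qJ x) (- qK x)"
definition "x * y = Quat
   (qRe x * qRe y - qI x * qI y - qJ x * qJ y - qK x * qK y)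
   (qRe x * qI y + qI x * qRe y + qJ x * qK y - qK x * qJ y)
   (qRe x * qJ y - qI x * qK y + qJ x * qRe y + qK x * qI y)
   (qRe x * qK y + qI x * qJ y - qJ x * qI y + qK x * qRe y)"
instance
  by standard (auto intro!: quat_eqI simp: zero_quat_def one_quat_def plus_quat_def
      minus_quat_def uminus_quat_def times_quat_def algebra_simps)
end

definition qi :: quat where "qi = Quat 0 1 0 0"
definition qj :: quat where "qj = Quat 0 0 1 0"
definition qk :: quat where "qk = Quat 0 0 0 1"
definition qcnj :: "quat \<Rightarrow> quat" where "qcnj x = Quat (qRe x) (- qI x) (- qJ x) (- qK x)"
definition quat_of_real :: "real \<Rightarrow> quat" where "quat_of_real r = Quat r 0 0 0"

section \<open>Quaternionic matrices of size N (indices 0..N-1), as functions vanishing outside\<close>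

type_synonym qmat = "nat \<Rightarrow> nat \<Rightarrow> quat"

definition qmats :: "nat \<Rightarrow> qmat set" where
  "qmats N = {A. \<forall>i j. (N \<le> i \<or> N \<le> j) \<longrightarrow> A i j = 0}"

definition mmul :: "nat \<Rightarrow> qmat \<Rightarrow> qmat \<Rightarrow> qmat" where
  "mmul N A B = (\<lambda>i j. if i < N \<and> j < N then (\<Sum>k<N. A i k * B k j) else 0)"

definition mId :: "nat \<Rightarrow> qmat" where
  "mId N = (\<lambda>i j. if i < N \<and> i = j then 1 else 0)"

definition mstar :: "qmat \<Rightarrow> qmat" where
  "mstar A = (\<lambda>i j. qcnj (A j i))"

definition qtrace :: "nat \<Rightarrow> qmat \<Rightarrow> quat" where
  "qtrace N A = (\<Sum>i<N. A i i)"

definition GLq :: "nat \<Rightarrow> qmat set" where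
  "GLq N = {A \<in> qmats N. \<exists>B \<in> qmats N. mmul N A B = mId N \<and> mmul N B A = mId N}"

definition Inl :: "nat \<Rightarrow> qmat" where
  "Inl n = (\<lambda>i j. if i = j \<and> i < n then 1 else if i = n \<and> j = n then -1 else 0)"

definition Sp :: "nat \<Rightarrow> qmat set" where
  "Sp n = {A \<in> GLq (n+1). mmul (n+1) (mmul (n+1) (mstar A) (Inl n)) A = Inl n}"

definition Sp_group :: "nat \<Rightarrow> qmat monoid" where
  "Sp_group n = \<lparr>carrier = Sp n, mult = mmul (n+1), one = mId (n+1)\<rparr>"

text \<open>3x3 diagonal matrix and block matrix I_{n-2} (+) c of size n+1\<close>
definition diag3 :: "quat \<Rightarrow> quat \<Rightarrow> quat \<Rightarrow> qmat" where
  "diag3 a b c = (\<lambda>i j. if i = j then (if i = 0 then a else if i = 1 then b else if i = 2 then c else 0) else 0)"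

definition blk :: "nat \<Rightarrow> qmat \<Rightarrow> qmat" where
  "blk n c = (\<lambda>i j. if i < n - 2 \<and> j < n - 2 then (if i = j then 1 else 0)
      else if n - 2 \<le> i \<and> i \<le> n \<and> n - 2 \<le> j \<and> j \<le> n then c (i - (n - 2)) (j - (n - 2))
      else 0)"

end

theory Submission
  imports Defs
begin

definition Dg :: "(nat \<Rightarrow> quat) \<Rightarrow> qmat" where "Dg d = (\<lambda>i j. if i = j then d i else 0)"

lemma mmul_qmats: "mmul N A B \<in> qmats N"
  by (simp add: qmats_def mmul_def)

lemma mmul_assoc: "mmul N (mmul N A B) C = mmul N A (mmul N B C)"
proof (intro ext)
  fix i j
  show "mmul N (mmul N A B) C i j = mmul N A (mmul N B C) i j"
  proof (cases "i < N \<and> j < N")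
    case True
    have "mmul N (mmul N A B) C i j = (\<Sum>k<N. (\<Sum>m<N. A i m * B m k) * C k j)"
      using True by (simp add: mmul_def)
    also have "\<dots> = (\<Sum>k<N. \<Sum>m<N. A i m * B m k * C k j)"
      by (simp add: sum_distrib_right)
    also have "\<dots> = (\<Sum>m<N. \<Sum>k<N. A i m * B m k * C k j)"
      by (rule sum.swap)
    also have "\<dots> = (\<Sum>m<N. A i m * (\<Sum>k<N. B m k * C k j))"
      by (simp add: sum_distrib_left mult.assoc)
    also have "\<dots> = mmul N A (mmul N B C) i j"
      using True by (simp add: mmul_def)
    finally show ?thesis .
  qed (auto simp: mmul_def)
qed

lemma mmul_Dg_right: "mmul N A (Dg d) = (\<lambda>i j. if i < N \<and> j < N then A i j * d j else 0)"
proof (intro ext)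
  fix i j
  have "(\<Sum>k<N. A i k * (if k = j then d k else 0)) = (\<Sum>k<N. if k = j then A i k * d k else 0)"
    by (rule sum.cong) auto
  then show "mmul N A (Dg d) i j = (if i < N \<and> j < N then A i j * d j else 0)"
    by (simp add: mmul_def Dg_def sum.delta')
qed

lemma mmul_Dg_left: "mmul N (Dg d) A = (\<lambda>i j. if i < N \<and> j < N then d i * A i j else 0)"
proof (intro ext)
  fix i j
  have "(\<Sum>k<N. (if i = k then d i else 0) * A k j) = (\<Sum>k<N. if i = k then d i * A i j else 0)"
    by (rule sum.cong) auto
  then show "mmul N (Dg d) A i j = (if i < N \<and> j < N then d i * A i j else 0)"
    by (simp add: mmul_def Dg_def sum.delta)
qed

lemma mId_Dg: "mId N = Dg (\<lambda>i. if i < N then 1 else 0)"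
  by (auto simp: mId_def Dg_def)

lemma mmul_mId_left: "A \<in> qmats N \<Longrightarrow> mmul N (mId N) A = A"
  unfolding mId_Dg mmul_Dg_left qmats_def by (intro ext) (auto simp: not_less)

lemma mmul_mId_right: "A \<in> qmats N \<Longrightarrow> mmul N A (mId N) = A"
  unfolding mId_Dg mmul_Dg_right qmats_def by (intro ext) (auto simp: not_less)

lemma qcnj_mult: "qcnj (x * y) = qcnj y * qcnj x"
  by (simp add: qcnj_def times_quat_def)
lemma qcnj_add: "qcnj (x + y) = qcnj x + qcnj y"
  by (simp add: qcnj_def plus_quat_def)
lemma qcnj_0[simp]: "qcnj 0 = 0" by (simp add: qcnj_def zero_quat_def)
lemma qcnj_1[simp]: "qcnj 1 = 1" by (simp add: qcnj_def one_quat_def)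
lemma qcnj_sum: "qcnj (sum f A) = sum (\<lambda>x. qcnj (f x)) A"
  by (induction A rule: infinite_finite_induct) (simp_all add: qcnj_add)

lemma mstar_mmul: "mstar (mmul N A B) = mmul N (mstar B) (mstar A)"
  by (intro ext) (auto simp: mstar_def mmul_def qcnj_sum qcnj_mult)

lemma mstar_mId: "mstar (mId N) = mId N"
  by (intro ext) (auto simp: mstar_def mId_def)

lemma qRe_sum: "qRe (sum f A) = sum (\<lambda>x. qRe (f x)) A"
  by (induction A rule: infinite_finite_induct) (simp_all add: zero_quat_def plus_quat_def)
lemma qI_sum: "qI (sum f A) = sum (\<lambda>x. qI (f x)) A"
  by (induction A rule: infinite_finite_induct) (simp_all add: zero_quat_def plus_quat_def)
lemma qJ_sum: "qJ (sum f A) = sum (\<lambda>x. qJ (f x)) A"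
  by (induction A rule: infinite_finite_induct) (simp_all add: zero_quat_def plus_quat_def)
lemma qK_sum: "qK (sum f A) = sum (\<lambda>x. qK (f x)) A"
  by (induction A rule: infinite_finite_induct) (simp_all add: zero_quat_def plus_quat_def)
lemma fst_sum': "fst (sum f A) = sum (\<lambda>x. fst (f x)) A"
  by (induction A rule: infinite_finite_induct) simp_all
lemma snd_sum': "snd (sum f A) = sum (\<lambda>x. snd (f x)) A"
  by (induction A rule: infinite_finite_induct) simp_all

lemma blk_Dg: "n \<ge> 2 \<Longrightarrow> blk n (diag3 a b c) = Dg (\<lambda>i. if i < n - 2 then 1 else if i = n - 2 then a
   else if i = n - 1 then b else if i = n then c else 0)"
proof (intro ext)
  fix i j assume n: "n \<ge> 2"
  consider "i < n-2" | "i = n-2" | "i = n-1" | "i = n" | "i > n" by arith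
  then show "blk n (diag3 a b c) i j = Dg (\<lambda>i. if i < n - 2 then 1 else if i = n - 2 then a
   else if i = n - 1 then b else if i = n then c else 0) i j"
  proof cases
    case 1 then show ?thesis by (simp add: blk_def diag3_def Dg_def)
  next
    case 2 then show ?thesis using n by (cases "j = n - 2") (auto simp: blk_def diag3_def Dg_def)
  next
    case 3 then show ?thesis using n by (cases "j = n - 1") (auto simp: blk_def diag3_def Dg_def)
  next
    case 4 then show ?thesis using n by (cases "j = n") (auto simp: blk_def diag3_def Dg_def)
  next
    case 5 then show ?thesis using n by (auto simp: blk_def diag3_def Dg_def)
  qed
qed

lemma Inl_Dg: "Inl n = Dg (\<lambda>i. if i < n then 1 else if i = n then -1 else 0)"
  by (intro ext) (auto simp: Inl_def Dg_def)

lemma mstar_qmats: "A \<in> qmats N \<Longrightarrow> mstar A \<in> qmats N"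
  by (simp add: qmats_def mstar_def)

lemma Inl_qmats: "Inl n \<in> qmats (n+1)"
  by (simp add: qmats_def Inl_def)

lemma Inl_sq: "mmul (n+1) (Inl n) (Inl n) = mId (n+1)"
  unfolding Inl_Dg mmul_Dg_right by (intro ext) (auto simp: Dg_def mId_def)

definition X :: "quat \<Rightarrow> real" where "X q = qRe q ^ 2 + qI q ^ 2 - qJ q ^ 2 - qK q ^ 2"
definition Y :: "quat \<Rightarrow> real" where "Y q = 2 * (qI q * qJ q + qRe q * qK q)"
definition Z :: "quat \<Rightarrow> real" where "Z q = 2 * (qI q * qK q - qRe q * qJ q)"
definition nq :: "quat \<Rightarrow> real" where "nq q = qRe q ^ 2 + qI q ^ 2 + qJ q ^ 2 + qK q ^ 2"

lemma term_neg: "qI (c * Quat 0 (-2) 0 0 * (- qcnj c)) = 2 * X c"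
  "qJ (c * Quat 0 (-2) 0 0 * (- qcnj c)) = 2 * Y c"
  "qK (c * Quat 0 (-2) 0 0 * (- qcnj c)) = 2 * Z c"
  by (cases c; simp add: times_quat_def qcnj_def uminus_quat_def X_def Y_def Z_def power2_eq_square algebra_simps)+

lemma term_pos: "qI (c * Quat 0 (-2) 0 0 * qcnj c) = - 2 * X c"
  "qJ (c * Quat 0 (-2) 0 0 * qcnj c) = - 2 * Y c"
  "qK (c * Quat 0 (-2) 0 0 * qcnj c) = - 2 * Z c"
  by (cases c; simp add: times_quat_def qcnj_def uminus_quat_def X_def Y_def Z_def power2_eq_square algebra_simps)+

lemma col_pos: "qRe (qcnj c * c) = nq c"
  by (cases c; simp add: times_quat_def qcnj_def one_quat_def nq_def power2_eq_square)
lemma col_neg: "qRe (- (qcnj c * c)) = - nq c"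
  by (cases c; simp add: times_quat_def qcnj_def one_quat_def uminus_quat_def nq_def power2_eq_square)

lemma nq_nonneg: "nq c \<ge> 0" by (simp add: nq_def)

lemma norm_vv: "norm (X q, Y q, Z q) = nq q"
proof -
  have e: "(X q)^2 + (Y q)^2 + (Z q)^2 = (nq q)^2"
    unfolding X_def Y_def Z_def nq_def by algebra
  have "norm (X q, Y q, Z q) = sqrt ((X q)^2 + (Y q)^2 + (Z q)^2)"
    by (simp add: norm_prod_def)
  also have "\<dots> = nq q" using e nq_nonneg[of q] by simp
  finally show ?thesis .
qed

lemma q_uminus: "qI (- x) = - qI x" "qJ (- x) = - qJ x" "qK (- x) = - qK x"
  by (simp_all add: uminus_quat_def)

lemma re_real: "x \<in> range quat_of_real \<Longrightarrow> qI x = 0 \<and> qJ x = 0 \<and> qK x = 0"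
  by (auto simp: quat_of_real_def)

lemma comb_I: "qI (a + b - c - d) = qI a + qI b - qI c - qI d"
  "qJ (a + b - c - d) = qJ a + qJ b - qJ c - qJ d"
  "qK (a + b - c - d) = qK a + qK b - qK c - qK d"
  by (simp_all add: plus_quat_def minus_quat_def)

lemma trace_formula: "qtrace N (mmul N (mmul N g (Dg d)) B) = (\<Sum>i<N. \<Sum>k<N. g i k * d k * B k i)"
  unfolding qtrace_def mmul_Dg_right by (simp add: mmul_def)

theorem proposition4p12:
  fixes n :: nat and G :: "qmat set"
  assumes "n \<ge> 2"
    and "subgroup G (Sp_group n)"
    and "blk n (diag3 1 qi (- qi)) \<in> G"
    and "blk n (diag3 qi 1 (- qi)) \<in> G"
    and "blk n (diag3 qi (- qi) 1) \<in> G"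
  shows "\<forall>g \<in> Sp n.
     \<not> (qtrace (n+1) ` {mmul (n+1) (mmul (n+1) g x) (inv\<^bsub>Sp_group n\<^esub> g) | x. x \<in> G}
          \<subseteq> range quat_of_real)"
proof (intro ballI notI)
  fix g assume g: "g \<in> Sp n"
    and H: "qtrace (n+1) ` {mmul (n+1) (mmul (n+1) g x) (inv\<^bsub>Sp_group n\<^esub> g) | x. x \<in> G}
          \<subseteq> range quat_of_real"
  define N where "N = n+1"
  define J where "J = Inl n"
  have Jq: "J \<in> qmats N" using Inl_qmats by (simp add: J_def N_def)
  have JJ: "mmul N J J = mId N" using Inl_sq by (simp add: J_def N_def)
  from g have gq: "g \<in> qmats N" and gJ: "mmul N (mmul N (mstar g) J) g = J"
    and "\<exists>B\<in>qmats N. mmul N g B = mId N \<and> mmul N B g = mId N"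
    by (auto simp: Sp_def GLq_def N_def J_def)
  then obtain B where Bq: "B \<in> qmats N" and gB: "mmul N g B = mId N" and Bg: "mmul N B g = mId N"
    by blast
  have BJ: "mmul N (mmul N (mstar B) J) B = J"
  proof -
    have "mmul N (mmul N (mstar B) J) B = mmul N (mmul N (mstar B) (mmul N (mmul N (mstar g) J) g)) B"
      by (simp add: gJ)
    also have "\<dots> = mmul N (mmul N (mmul N (mstar B) (mstar g)) J) (mmul N g B)"
      by (simp add: mmul_assoc)
    also have "\<dots> = mmul N (mmul N (mstar (mmul N g B)) J) (mmul N g B)"
      by (simp add: mstar_mmul)
    also have "\<dots> = J" by (simp add: gB mstar_mId mmul_mId_left mmul_mId_right Jq)
    finally show ?thesis .
  qed
  have BSp: "B \<in> Sp n"
    unfolding Sp_def GLq_def using Bq gq Bg gB BJ by (auto simp: N_def J_def)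
  have invB: "inv\<^bsub>Sp_group n\<^esub> g = B"
    unfolding m_inv_def Sp_group_def
  proof (simp, rule the_equality)
    show "B \<in> Sp n \<and> mmul (Suc n) g B = mId (Suc n) \<and> mmul (Suc n) B g = mId (Suc n)"
      using BSp gB Bg by (simp add: N_def)
  next
    fix y assume y: "y \<in> Sp n \<and> mmul (Suc n) g y = mId (Suc n) \<and> mmul (Suc n) y g = mId (Suc n)"
    then have yq: "y \<in> qmats N" by (simp add: Sp_def GLq_def N_def)
    have "y = mmul N y (mmul N g B)" using yq by (simp add: gB mmul_mId_right)
    also have "\<dots> = mmul N (mmul N y g) B" by (simp add: mmul_assoc)
    also have "\<dots> = B" using y Bq by (simp add: N_def mmul_mId_left)
    finally show "y = B" .
  qed
  have SJ: "mmul N (mstar g) J = mmul N J B"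
  proof -
    have "mmul N (mstar g) J = mmul N (mmul N (mstar g) J) (mmul N g B)"
      by (simp add: gB mmul_mId_right mmul_qmats)
    also have "\<dots> = mmul N (mmul N (mmul N (mstar g) J) g) B" by (simp add: mmul_assoc)
    finally show ?thesis by (simp add: gJ)
  qed
  have Bform: "B = mmul N J (mmul N (mstar g) J)"
    by (simp add: SJ mmul_assoc[symmetric] JJ mmul_mId_left Bq)
  have Bn: "\<And>i. i < N \<Longrightarrow> B n i = (if i < n then - qcnj (g i n) else qcnj (g i n))"
    unfolding Bform J_def Inl_Dg mmul_Dg_right mmul_Dg_left
    by (auto simp: N_def mstar_def)
  define d1 where "d1 = (\<lambda>i. if i < n - 2 then 1 else if i = n - 2 then (1::quat)
   else if i = n - 1 then qi else if i = n then - qi else 0)"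
  define d2 where "d2 = (\<lambda>i. if i < n - 2 then 1 else if i = n - 2 then qi
   else if i = n - 1 then (1::quat) else if i = n then - qi else 0)"
  define d3 where "d3 = (\<lambda>i. if i < N then d1 i * d2 i else 0)"
  define d0 where "d0 = (\<lambda>i. if i < N then (1::quat) else 0)"
  define T where "T d = (\<Sum>i<N. \<Sum>k<N. g i k * d k * B k i)" for d
  have X1: "Dg d1 \<in> G" using assms(3) blk_Dg[OF assms(1)] by (simp add: d1_def)
  have X2: "Dg d2 \<in> G" using assms(4) blk_Dg[OF assms(1)] by (simp add: d2_def)
  have X3: "Dg d3 \<in> G"
  proof -
    have "mmul N (Dg d1) (Dg d2) \<in> G" using subgroup.m_closed[OF assms(2) X1 X2]
      by (simp add: Sp_group_def N_def)
    moreover have "mmul N (Dg d1) (Dg d2) = Dg d3"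
      unfolding mmul_Dg_right by (intro ext) (auto simp: Dg_def d3_def)
    ultimately show ?thesis by simp
  qed
  have X0: "Dg d0 \<in> G" using subgroup.one_closed[OF assms(2)]
    by (simp add: Sp_group_def N_def mId_Dg d0_def)
  have Treal: "qI (T d) = 0 \<and> qJ (T d) = 0 \<and> qK (T d) = 0" if "Dg d \<in> G" for d
  proof -
    have "mmul N (mmul N g (Dg d)) B \<in> {mmul (n+1) (mmul (n+1) g x) (inv\<^bsub>Sp_group n\<^esub> g) | x. x \<in> G}"
      using that by (auto simp: invB N_def)
    then have "qtrace N (mmul N (mmul N g (Dg d)) B) \<in> range quat_of_real"
      using H by (auto simp: N_def)
    then show ?thesis by (simp add: trace_formula T_def re_real)
  qed
  define \<delta> where "\<delta> k = d1 k + d2 k - d3 k - d0 k" for k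
  have \<delta>v: "\<delta> k = (if k = n then Quat 0 (-2) 0 0 else 0)" if kN: "k < N" for k
  proof -
    consider "k < n-2" | "k = n-2" | "k = n-1" | "k = n" using kN N_def by arith
    then show ?thesis
    proof cases
      case 1 then show ?thesis using assms(1) kN by (auto simp: \<delta>_def d1_def d2_def d3_def d0_def)
    next
      case 2 then show ?thesis using assms(1) kN by (auto simp: \<delta>_def d1_def d2_def d3_def d0_def)
    next
      case 3 then show ?thesis using assms(1) kN by (auto simp: \<delta>_def d1_def d2_def d3_def d0_def)
    next
      case 4 then show ?thesis using assms(1) kN
        by (auto simp: \<delta>_def d1_def d2_def d3_def d0_def qi_def times_quat_def plus_quat_def
            minus_quat_def uminus_quat_def one_quat_def zero_quat_def)
    qed
  qed
  have comb: "T d1 + T d2 - T d3 - T d0 = (\<Sum>i<N. g i n * Quat 0 (-2) 0 0 * B n i)"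
  proof -
    have e1: "g i k * d1 k * B k i + g i k * d2 k * B k i - g i k * d3 k * B k i - g i k * d0 k * B k i
        = g i k * \<delta> k * B k i" for i k
      by (simp add: \<delta>_def algebra_simps)
    have "T d1 + T d2 - T d3 - T d0 = (\<Sum>i<N. \<Sum>k<N. g i k * \<delta> k * B k i)"
      unfolding T_def by (simp only: sum.distrib[symmetric] sum_subtractf[symmetric] e1)
    also have "\<dots> = (\<Sum>i<N. g i n * Quat 0 (-2) 0 0 * B n i)"
    proof (rule sum.cong[OF refl])
      fix i
      have "(\<Sum>k<N. g i k * \<delta> k * B k i) = (\<Sum>k<N. if k = n then g i k * Quat 0 (-2) 0 0 * B k i else 0)"
        by (rule sum.cong) (auto simp: \<delta>v)
      then show "(\<Sum>k<N. g i k * \<delta> k * B k i) = g i n * Quat 0 (-2) 0 0 * B n i"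
        by (simp add: N_def)
    qed
    finally show ?thesis .
  qed
  have z: "qI (T d1 + T d2 - T d3 - T d0) = 0 \<and> qJ (T d1 + T d2 - T d3 - T d0) = 0
      \<and> qK (T d1 + T d2 - T d3 - T d0) = 0"
    using Treal[OF X1] Treal[OF X2] Treal[OF X3] Treal[OF X0] by (simp add: comb_I)
  define c where "c i = g i n" for i
  have splitsum: "(\<Sum>i<N. f i) = (\<Sum>i<n. f i) + f n" for f :: "nat \<Rightarrow> real"
    by (simp add: N_def)
  have tI: "qI (\<Sum>i<N. g i n * Quat 0 (-2) 0 0 * B n i) = 2 * (\<Sum>i<n. X (c i)) - 2 * X (c n)"
   and tJ: "qJ (\<Sum>i<N. g i n * Quat 0 (-2) 0 0 * B n i) = 2 * (\<Sum>i<n. Y (c i)) - 2 * Y (c n)"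
   and tK: "qK (\<Sum>i<N. g i n * Quat 0 (-2) 0 0 * B n i) = 2 * (\<Sum>i<n. Z (c i)) - 2 * Z (c n)"
  proof -
    have Bl: "B n i = - qcnj (c i)" if "i < n" for i using Bn[of i] that by (simp add: N_def c_def)
    have Bnn: "B n n = qcnj (c n)" using Bn[of n] by (simp add: N_def c_def)
    show "qI (\<Sum>i<N. g i n * Quat 0 (-2) 0 0 * B n i) = 2 * (\<Sum>i<n. X (c i)) - 2 * X (c n)"
      unfolding qI_sum splitsum
      by (simp add: Bl Bnn q_uminus term_pos sum_distrib_left c_def[symmetric])
    show "qJ (\<Sum>i<N. g i n * Quat 0 (-2) 0 0 * B n i) = 2 * (\<Sum>i<n. Y (c i)) - 2 * Y (c n)"
      unfolding qJ_sum splitsum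
      by (simp add: Bl Bnn q_uminus term_pos sum_distrib_left c_def[symmetric])
    show "qK (\<Sum>i<N. g i n * Quat 0 (-2) 0 0 * B n i) = 2 * (\<Sum>i<n. Z (c i)) - 2 * Z (c n)"
      unfolding qK_sum splitsum
      by (simp add: Bl Bnn q_uminus term_pos sum_distrib_left c_def[symmetric])
  qed
  have sX: "(\<Sum>i<n. X (c i)) = X (c n)" using z tI by (simp add: comb)
  have sY: "(\<Sum>i<n. Y (c i)) = Y (c n)" using z tJ by (simp add: comb)
  have sZ: "(\<Sum>i<n. Z (c i)) = Z (c n)" using z tK by (simp add: comb)
  have col: "(\<Sum>i<n. nq (c i)) - nq (c n) = -1"
  proof -
    have "mmul N (mmul N (mstar g) J) g n n = J n n" using gJ by simp
    then have "(\<Sum>k<N. qcnj (c k) * (if k < n then 1 else if k = n then -1 else 0) * c k) = -1"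
      unfolding J_def Inl_Dg mmul_Dg_right by (simp add: mmul_def N_def Dg_def mstar_def c_def)
    then have "qRe (\<Sum>k<N. qcnj (c k) * (if k < n then 1 else if k = n then -1 else 0) * c k) = -1"
      by (simp add: uminus_quat_def one_quat_def)
    moreover have "qRe (\<Sum>k<N. qcnj (c k) * (if k < n then 1 else if k = n then -1 else 0) * c k)
       = (\<Sum>i<n. nq (c i)) - nq (c n)"
      unfolding qRe_sum splitsum by (simp add: col_pos col_neg)
    ultimately show ?thesis by simp
  qed
  have vsum: "(X (c n), Y (c n), Z (c n)) = (\<Sum>i<n. (X (c i), Y (c i), Z (c i)))"
    by (simp add: fst_sum' snd_sum' sX sY sZ prod_eq_iff)
  have "nq (c n) = norm (\<Sum>i<n. (X (c i), Y (c i), Z (c i)))" using vsum norm_vv by metis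
  also have "\<dots> \<le> (\<Sum>i<n. norm (X (c i), Y (c i), Z (c i)))" by (rule norm_sum)
  also have "\<dots> = (\<Sum>i<n. nq (c i))" by (simp add: norm_vv)
  finally show False using col by simp
qed

end
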